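(* Let $V$ be a vector space over $\mathrm{GF}(2)$ of finite dimension at least $3$. Then there exists a trilinear form $g:V^3\to\mathrm{GF}(2)$ such that for every $0\ne x\in V$ the induced bilinear form $g(x,-,-):V^2\to\mathrm{GF}(2)$ is not symmetric. *)

theory Defs
  imports Complex_Main "HOL-Library.Z2"
begin

definition trilinear_form ::
  "(bit \<Rightarrow> 'v::ab_group_add \<Rightarrow> 'v) \<Rightarrow> ('v \<Rightarrow> 'v \<Rightarrow> 'v \<Rightarrow> bit) \<Rightarrow> bool" where
  "trilinear_form scale g \<longleftrightarrow>
     (\<forall>y z. Vector_Spaces.linear scale (*) (\<lambda>x. g x y z)) \<and>
     (\<forall>x z. Vector_Spaces.linear scale (*) (\<lambda>y. g x y z)) \<and>
     (\<forall>x y. Vector_Spaces.linear scale (*) (\<lambda>z. g x y z))"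

end

theory Submission
  imports Defs
begin

theorem lemma4p4:
  fixes scale :: "bit \<Rightarrow> 'v::ab_group_add \<Rightarrow> 'v" and Basis :: "'v set"
  assumes "finite_dimensional_vector_space scale Basis"
    and "vector_space.dim scale (UNIV :: 'v set) \<ge> 3"
  shows "\<exists>g. trilinear_form scale g \<and>
           (\<forall>x. x \<noteq> 0 \<longrightarrow> \<not> (\<forall>y z. g x y z = g x z y))"
proof -
  interpret V: finite_dimensional_vector_space scale Basis by fact
  define R where "R = V.representation Basis"
  have lin: "Vector_Spaces.linear scale (*) (\<lambda>v. R v b)" for b
    unfolding R_def by (rule V.linear_representation[OF V.independent_Basis V.span_Basis])
  have vs2: "vector_space ((*) :: bit \<Rightarrow> bit \<Rightarrow> bit)"
    using lin[of undefined] unfolding Vector_Spaces.linear_iff by blast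
  have vs1: "vector_space scale" by unfold_locales
  have Radd: "R (x + y) b = R x b + R y b" for x y b
    using lin[of b] unfolding Vector_Spaces.linear_iff by blast
  have Rsc: "R (scale c x) b = c * R x b" for c x b
    using lin[of b] unfolding Vector_Spaces.linear_iff by blast
  obtain xs where xs: "distinct xs" "set xs = Basis"
    using finite_distinct_list[OF V.finite_Basis] by blast
  define n where "n = length xs"
  have n3: "n \<ge> 3" using assms(2) xs by (metis V.dim_UNIV distinct_card n_def)
  have Rb: "R (xs!j) (xs!i) = (if i = j then 1 else 0)" if "i < n" "j < n" for i j
  proof -
    have "R (xs!j) = (\<lambda>v. if v = xs!j then 1 else 0)"
      unfolding R_def using V.representation_basis[OF V.independent_Basis] that xs
      by (metis n_def nth_mem)
    then show ?thesis using that xs by (simp add: n_def nth_eq_iff_index_eq)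
  qed
  define g where "g x y z = (\<Sum>i<n. R x (xs!i) * R y (xs!i) * R z (xs!((i+1) mod n)))" for x y z
  have tri: "trilinear_form scale g"
    unfolding trilinear_form_def Vector_Spaces.linear_iff
  proof (intro conjI allI)
    fix y z x x' :: 'v and c :: bit
    show "vector_space scale" by (rule vs1)
    show "vector_space ((*) :: bit \<Rightarrow> bit \<Rightarrow> bit)" by (rule vs2)
    show "g (x + x') y z = g x y z + g x' y z"
      unfolding g_def by (simp only: Radd distrib_right sum.distrib)
    show "g (scale c x) y z = c * g x y z"
      unfolding g_def by (simp only: Rsc sum_distrib_left mult.assoc)
    show "g y (x + x') z = g y x z + g y x' z"
      unfolding g_def by (simp only: Radd distrib_right distrib_left sum.distrib)
    show "g y (scale c x) z = c * g y x z"
      unfolding g_def by (simp only: Rsc sum_distrib_left mult.assoc mult.left_commute)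
    show "g y z (x + x') = g y z x + g y z x'"
      unfolding g_def by (simp only: Radd distrib_right distrib_left sum.distrib)
    show "g y z (scale c x) = c * g y z x"
      unfolding g_def by (simp only: Rsc sum_distrib_left mult.assoc mult.left_commute)
  qed (rule vs1 vs2)+
  moreover have "\<not> (\<forall>y z. g x y z = g x z y)" if "x \<noteq> 0" for x
  proof
    assume sym: "\<forall>y z. g x y z = g x z y"
    have "\<exists>b. R x b \<noteq> 0"
    proof (rule ccontr)
      assume "\<not> ?thesis"
      then have "x = 0"
        using V.sum_nonzero_representation_eq[OF V.independent_Basis, of x] V.span_Basis
        by (simp add: R_def)
      with that show False by simp
    qed
    then obtain b where b: "R x b \<noteq> 0" by blast
    then have "b \<in> Basis" unfolding R_def by (rule V.representation_ne_zero)
    then obtain k where k: "k < n" "xs!k = b" using xs by (auto simp: n_def in_set_conv_nth)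
    define k1 where "k1 = (k+1) mod n"
    have k1: "k1 < n" "k1 \<noteq> k" using n3 k unfolding k1_def
      by (auto simp: mod_Suc)
    have "g x (xs!k) (xs!k1) = (\<Sum>i<n. if i = k then R x (xs!i) else 0)"
      unfolding g_def
    proof (rule sum.cong)
      fix i assume i: "i \<in> {..<n}"
      show "R x (xs!i) * R (xs!k) (xs!i) * R (xs!k1) (xs!((i+1) mod n)) =
            (if i = k then R x (xs!i) else 0)"
      proof (cases "i = k")
        case True
        then show ?thesis using i k(1) k1 by (simp add: Rb k1_def)
      next
        case False then show ?thesis using i k(1) k1 by (simp add: Rb)
      qed
    qed simp
    also have "\<dots> = R x b" using k by (simp add: sum.delta)
    finally have 1: "g x (xs!k) (xs!k1) = R x b" .
    have "g x (xs!k1) (xs!k) = (\<Sum>i<n. 0)"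
      unfolding g_def
    proof (rule sum.cong)
      fix i assume i: "i \<in> {..<n}"
      show "R x (xs!i) * R (xs!k1) (xs!i) * R (xs!k) (xs!((i+1) mod n)) = 0"
      proof (cases "i = k1")
        case True
        have "(k1 + 1) mod n \<noteq> k" using n3 k unfolding k1_def
          by (auto simp: mod_Suc)
        then show ?thesis using True i k(1) k1 by (simp add: Rb)
      next
        case False then show ?thesis using i k(1) k1 by (simp add: Rb)
      qed
    qed simp
    then have 2: "g x (xs!k1) (xs!k) = 0" by simp
    from sym 1 2 b show False by metis
  qed
  ultimately show ?thesis by blast
qed

end
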